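(* Let $(a,b)\in\mathbb N^2$ be coprime and $k\ge1$ an integer. (1) If $(d_1,d_2)=(kab+1,kb^2)$ or $(d_1,d_2)=(ka^2,kab+1)$, then $(d_1,d_2)$ and $(ka,kb)$ satisfy the one-bending property. (2) Let $(d_1,d_2)\in\mathbb N^2$ with $d_1b-d_2a\ne0$ and put $m=|d_1b-d_2a|$. If $d_1\ge mka$ in the case $d_1b-d_2a<0$, or $d_2\ge mkb$ in the case $d_1b-d_2a>0$, then $(d_1,d_2)$ and $(ka,kb)$ satisfy the one-bending property. (3) For every integer $m>0$ there exist infinitely many $(d_1,d_2)\in\mathbb N^2$ such that $m=|d_1b-d_2a|$ and $(d_1,d_2)$ and $(ka,kb)$ satisfy the one-bending property.
   Context: Rank-2 scattering diagram: $\Bbbk$ a field of characteristic $0$, $M=\mathbb Z^2$ with basis $e_1,e_2$, $N=\operatorname{Hom}(M,\mathbb Z)$; positive integers $\ell_1,\ell_2$; independent variables $p_{i,k}$ ($i=1,2$, $1\le k\le\ell_i$); $\mathcal M$ their monoid of monomials; $\widehat R$ the completion of $\Bbbk[\mathcal M][x^{\pm1},y^{\pm1}]$ at the ideal generated by the $p_{i,k}$; $x^{(m_1,m_2)}=x^{m_1}y^{m_2}$. Walls: rays $b-\mathbb R_{\ge0}m_0$ or lines $b-\mathbb Rm_0$ ($m_0$ primitive) with functions $1+\sum_{k\ge1}c_kx^{km_0}$, $c_k$ in that ideal; crossing with velocity $v$ acts by $x^m\mapsto x^mf^{\langle n,m\rangle}$ ($n\in N$ primitive orthogonal to the wall, $\langle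 n,v\rangle<0$); consistency: trivial path-ordered products around regular loops. $\mathfrak D=\operatorname{Scat}(P_1,P_2)$, $P_1=1+\sum_{k=1}^{\ell_1}p_{1,k}x^k$, $P_2=1+\sum_{k=1}^{\ell_2}p_{2,k}y^k$: the consistent diagram (unique up to equivalence) made of the lines $(\mathbb Re_1,P_1)$, $(\mathbb Re_2,P_2)$ and rays, chosen with rays $\mathbb R_{\le0}(a,b)$ for distinct coprime $(a,b)\in\mathbb Z_{>0}^2$. A broken line for $m_0\in M\setminus\{0\}$ with endpoint $Q$ is a continuous piecewise linear $\beta:(-\infty,0]\to\mathbb R^2$ avoiding ray endpoints and wall intersections, with breakpoints $\tau_1<\dots<\tau_\ell<0$ and monomials $c_ix^{m_i}$ on linear pieces, $c_0=1$, $\beta(0)=Q$, $\dot\beta=-m_i$, transversal crossings at breakpoints, $c_ix^{m_i}$ a term other than $c_{i-1}x^{m_{i-1}}$ of $c_{i-1}x^{m_{i-1}}\prod_{\mathfrak d\ni\beta(\tau_i)}f_{\mathfrak d}^{\langle n,m_{i-1}\rangle}$ ($n$ primitive normal, $\langle n,m_{i-1}\rangle>0$); it bends at the $\beta(\tau_i)$; initial exponent $m_0$, final exponent $m_\ell$. One-bending property: for $(d_1,d_2)\in\mathbb N^2$, coprime $(a,b)\in\mathbb N^2$ with $d_1b-d_2a\ne0$, $k\ge1$, $(d_1,d_2)$ and $(ka,kb)$ satisfy it if every broken line in $\mathfrak D$ with initial exponent $(-d_1,-d_2)$, final exponent $(ka-d_1,kb-d_2)$ and no bend on the positive coordinate axes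 has exactly one bend. *)

theory Defs
  imports Complex_Main
begin

section \<open>Coefficient ring: the completion R^ of k[M][x^{+-1},y^{+-1}]\<close>

text \<open>A monomial in the variables p_{i,k} is an exponent function on index pairs (i,k).
  An element of R^ is represented by its coefficient function: coefficient of p^alpha x^m.\<close>

type_synonym pmono = "nat \<times> nat \<Rightarrow> nat"
type_synonym 'k pser = "pmono \<Rightarrow> 'k"
type_synonym 'k ser = "pmono \<Rightarrow> int \<times> int \<Rightarrow> 'k"

definition pvars :: "nat \<Rightarrow> nat \<Rightarrow> (nat \<times> nat) set" where
  "pvars l1 l2 = {(i,j). (i = 1 \<and> 1 \<le> j \<and> j \<le> l1) \<or> (i = 2 \<and> 1 \<le> j \<and> j \<le> l2)}"

definition pdeg :: "nat \<Rightarrow> nat \<Rightarrow> pmono \<Rightarrow> nat" where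
  "pdeg l1 l2 \<alpha> = (\<Sum>v\<in>pvars l1 l2. \<alpha> v)"

definition zero_mono :: pmono where "zero_mono = (\<lambda>_. 0)"

definition var_mono :: "nat \<times> nat \<Rightarrow> pmono" where
  "var_mono v = (\<lambda>w. if w = v then 1 else 0)"

definition below :: "pmono \<Rightarrow> pmono set" where
  "below \<alpha> = {\<beta>. \<forall>v. \<beta> v \<le> \<alpha> v}"

definition mdiff :: "pmono \<Rightarrow> pmono \<Rightarrow> pmono" where
  "mdiff \<alpha> \<beta> = (\<lambda>v. \<alpha> v - \<beta> v)"

definition in_Rhat :: "nat \<Rightarrow> nat \<Rightarrow> 'k::zero ser \<Rightarrow> bool" where
  "in_Rhat l1 l2 u \<longleftrightarrow>
     (\<forall>\<alpha> m. u \<alpha> m \<noteq> 0 \<longrightarrow> (\<forall>v. \<alpha> v \<noteq> 0 \<longrightarrow> v \<in> pvars l1 l2)) \<and>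
     (\<forall>\<alpha>. finite {m. u \<alpha> m \<noteq> 0})"

definition ser_zero :: "'k::field ser" where "ser_zero = (\<lambda>\<alpha> m. 0)"

definition ser_one :: "'k::field ser" where
  "ser_one = (\<lambda>\<alpha> m. if \<alpha> = zero_mono \<and> m = (0,0) then 1 else 0)"

definition ser_add :: "'k::field ser \<Rightarrow> 'k ser \<Rightarrow> 'k ser" where
  "ser_add u v = (\<lambda>\<alpha> m. u \<alpha> m + v \<alpha> m)"

definition ser_sub :: "'k::field ser \<Rightarrow> 'k ser \<Rightarrow> 'k ser" where
  "ser_sub u v = (\<lambda>\<alpha> m. u \<alpha> m - v \<alpha> m)"

text \<open>Product (well defined on R^: finitely many beta below alpha, finitely many m1).\<close>
definition ser_mul :: "'k::field ser \<Rightarrow> 'k ser \<Rightarrow> 'k ser" where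
  "ser_mul u v = (\<lambda>\<alpha> m. \<Sum>\<beta>\<in>below \<alpha>. \<Sum>m1\<in>{m1. u \<beta> m1 \<noteq> 0}.
      u \<beta> m1 * v (mdiff \<alpha> \<beta>) (fst m - fst m1, snd m - snd m1))"

fun ser_pow :: "'k::field ser \<Rightarrow> nat \<Rightarrow> 'k ser" where
  "ser_pow u 0 = ser_one"
| "ser_pow u (Suc n) = ser_mul u (ser_pow u n)"

text \<open>Reduction modulo I^N (I the ideal generated by the p_{i,k}).\<close>
definition ser_trunc :: "nat \<Rightarrow> nat \<Rightarrow> nat \<Rightarrow> 'k::field ser \<Rightarrow> 'k ser" where
  "ser_trunc l1 l2 N u = (\<lambda>\<alpha> m. if pdeg l1 l2 \<alpha> < N then u \<alpha> m else 0)"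

definition in_RN :: "nat \<Rightarrow> nat \<Rightarrow> nat \<Rightarrow> 'k::field ser \<Rightarrow> bool" where
  "in_RN l1 l2 N u \<longleftrightarrow> in_Rhat l1 l2 u \<and> (\<forall>\<alpha> m. u \<alpha> m \<noteq> 0 \<longrightarrow> pdeg l1 l2 \<alpha> < N)"

fun geom_sum :: "'k::field ser \<Rightarrow> nat \<Rightarrow> 'k ser" where
  "geom_sum g 0 = ser_zero"
| "geom_sum g (Suc j) = ser_add (geom_sum g j) (ser_pow g j)"

text \<open>Inverse of f = 1 + g (g in I) modulo I^N: sum_{j<N} (1-f)^j.\<close>
definition ser_inv_trunc :: "nat \<Rightarrow> nat \<Rightarrow> nat \<Rightarrow> 'k::field ser \<Rightarrow> 'k ser" where
  "ser_inv_trunc l1 l2 N f = ser_trunc l1 l2 N (geom_sum (ser_sub ser_one f) N)"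

definition ser_ipow :: "nat \<Rightarrow> nat \<Rightarrow> nat \<Rightarrow> 'k::field ser \<Rightarrow> int \<Rightarrow> 'k ser" where
  "ser_ipow l1 l2 N f e = ser_trunc l1 l2 N
     (if e \<ge> 0 then ser_pow f (nat e) else ser_pow (ser_inv_trunc l1 l2 N f) (nat (- e)))"

section \<open>Lattices M, N and wall-crossing automorphisms\<close>

definition ip :: "int \<times> int \<Rightarrow> int \<times> int \<Rightarrow> int" where
  "ip n m = fst n * fst m + snd n * snd m"

definition perp :: "int \<times> int \<Rightarrow> int \<times> int" where
  "perp d = (- snd d, fst d)"

definition crossing_normal :: "int \<times> int \<Rightarrow> int \<times> int \<Rightarrow> int \<times> int" where
  "crossing_normal d v = (if ip (perp d) v < 0 then perp d else (snd d, - fst d))"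

text \<open>Wall crossing modulo I^N: the k[M]-algebra automorphism x^m |-> x^m f^<n,m>.\<close>
definition wall_cross :: "nat \<Rightarrow> nat \<Rightarrow> nat \<Rightarrow> 'k::field ser \<Rightarrow> int \<times> int \<Rightarrow> 'k ser \<Rightarrow> 'k ser" where
  "wall_cross l1 l2 N f n u = ser_trunc l1 l2 N (\<lambda>\<alpha> m.
      \<Sum>\<beta>\<in>below \<alpha>. \<Sum>m1\<in>{m1. u \<beta> m1 \<noteq> 0}.
        u \<beta> m1 * ser_ipow l1 l2 N f (ip n m1) (mdiff \<alpha> \<beta>) (fst m - fst m1, snd m - snd m1))"

section \<open>The diagram Scat(P_1,P_2)\<close>

definition P1 :: "nat \<Rightarrow> 'k::field ser" where
  "P1 l1 = (\<lambda>\<alpha> m. if \<alpha> = zero_mono \<and> m = (0,0) then 1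
      else if (\<exists>j. 1 \<le> j \<and> j \<le> l1 \<and> \<alpha> = var_mono (1,j) \<and> m = (int j, 0)) then 1 else 0)"

definition P2 :: "nat \<Rightarrow> 'k::field ser" where
  "P2 l2 = (\<lambda>\<alpha> m. if \<alpha> = zero_mono \<and> m = (0,0) then 1
      else if (\<exists>j. 1 \<le> j \<and> j \<le> l2 \<and> \<alpha> = var_mono (2,j) \<and> m = (0, int j)) then 1 else 0)"

definition is_wall_fn :: "nat \<Rightarrow> nat \<Rightarrow> int \<times> int \<Rightarrow> 'k::field ser \<Rightarrow> bool" where
  "is_wall_fn l1 l2 d f \<longleftrightarrow> in_Rhat l1 l2 f \<and> f zero_mono (0,0) = 1 \<and>
     (\<forall>\<alpha> m. f \<alpha> m \<noteq> 0 \<longrightarrow> (\<alpha> = zero_mono \<and> m = (0,0)) \<or>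
        (\<alpha> \<noteq> zero_mono \<and> (\<exists>j::nat. 1 \<le> j \<and> m = (int j * fst d, int j * snd d))))"

text \<open>Ray directions: the rays are R_{<=0}(a,b), (a,b) coprime positive.\<close>
definition ray_dirs :: "(int \<times> int) set" where
  "ray_dirs = {(a,b). 0 < a \<and> 0 < b \<and> coprime a b}"

definition nontriv_rays :: "nat \<Rightarrow> nat \<Rightarrow> nat \<Rightarrow> (int \<times> int \<Rightarrow> 'k::field ser) \<Rightarrow> (int \<times> int) set" where
  "nontriv_rays l1 l2 N F = {d \<in> ray_dirs. ser_trunc l1 l2 N (F d) \<noteq> ser_trunc l1 l2 N ser_one}"

definition slope :: "int \<times> int \<Rightarrow> rat" where
  "slope d = of_int (snd d) / of_int (fst d)"

definition dir_of_slope :: "rat \<Rightarrow> int \<times> int" where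
  "dir_of_slope q = (snd (quotient_of q), fst (quotient_of q))"

text \<open>Rays nontrivial mod I^N, in increasing order of slope b/a, i.e. in counterclockwise
  order of the rays R_{<=0}(a,b) in the third quadrant.\<close>
definition sorted_rays :: "nat \<Rightarrow> nat \<Rightarrow> nat \<Rightarrow> (int \<times> int \<Rightarrow> 'k::field ser) \<Rightarrow> (int \<times> int) list" where
  "sorted_rays l1 l2 N F = map dir_of_slope (sorted_list_of_set (slope ` nontriv_rays l1 l2 N F))"

text \<open>The walls crossed (modulo I^N) by a counterclockwise loop around the origin starting in the
  open first quadrant, as (direction, velocity at crossing, function):
  positive y-axis, negative x-axis, rays in the third quadrant, negative y-axis, positive x-axis.\<close>
definition loop_walls :: "nat \<Rightarrow> nat \<Rightarrow> nat \<Rightarrow> (int \<times> int \<Rightarrow> 'k::field ser)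
     \<Rightarrow> ((int \<times> int) \<times> (int \<times> int) \<times> 'k ser) list" where
  "loop_walls l1 l2 N F =
     [((0,1), (-1,0), P2 l2), ((1,0), (0,-1), P1 l1)]
     @ map (\<lambda>d. (d, (snd d, - fst d), F d)) (sorted_rays l1 l2 N F)
     @ [((0,1), (1,0), P2 l2), ((1,0), (0,1), P1 l1)]"

text \<open>Path-ordered product modulo I^N (first crossed wall applied first).\<close>
definition path_product :: "nat \<Rightarrow> nat \<Rightarrow> nat \<Rightarrow> (int \<times> int \<Rightarrow> 'k::field ser) \<Rightarrow> 'k ser \<Rightarrow> 'k ser" where
  "path_product l1 l2 N F =
     fold (\<lambda>(d, v, f) acc. wall_cross l1 l2 N f (crossing_normal d v) \<circ> acc) (loop_walls l1 l2 N F) id"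

text \<open>F describes the ray functions of a consistent scattering diagram consisting of the lines
  (R e_1, P_1), (R e_2, P_2) and the rays (R_{<=0}(a,b), F(a,b)). By uniqueness, this pins down
  Scat(P_1,P_2).\<close>
definition scat_consistent :: "nat \<Rightarrow> nat \<Rightarrow> (int \<times> int \<Rightarrow> 'k::field ser) \<Rightarrow> bool" where
  "scat_consistent l1 l2 F \<longleftrightarrow>
     (\<forall>d\<in>ray_dirs. is_wall_fn l1 l2 d (F d)) \<and>
     (\<forall>N. finite (nontriv_rays l1 l2 N F) \<and>
          (\<forall>u. in_RN l1 l2 N u \<longrightarrow> path_product l1 l2 N F u = u))"

text \<open>Walls of Scat(P_1,P_2): (support, primitive direction, function).\<close>
definition scat_walls :: "nat \<Rightarrow> nat \<Rightarrow> (int \<times> int \<Rightarrow> 'k::field ser)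
     \<Rightarrow> ((real \<times> real) set \<times> (int \<times> int) \<times> 'k ser) set" where
  "scat_walls l1 l2 F =
     {({(x, 0) | x::real. True}, (1,0), P1 l1), ({(0, y) | y::real. True}, (0,1), P2 l2)}
     \<union> {({(- (t * of_int (fst d)), - (t * of_int (snd d))) | t::real. 0 \<le> t}, d, F d) | d. d \<in> ray_dirs}"

section \<open>Broken lines\<close>

definition pser_one :: "'k::field pser" where
  "pser_one = (\<lambda>\<alpha>. if \<alpha> = zero_mono then 1 else 0)"

definition mono_ser :: "'k::field pser \<Rightarrow> int \<times> int \<Rightarrow> 'k ser" where
  "mono_ser c m = (\<lambda>\<alpha> m'. if m' = m then c \<alpha> else 0)"

text \<open>Length of the part of the i-th linear piece (breakpoints taus, then 0) lying in [t,0].\<close>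
definition seglen :: "real list \<Rightarrow> real \<Rightarrow> nat \<Rightarrow> real" where
  "seglen taus t i = (let bks = taus @ [0];
      lo = (if i = 0 then t else max t (bks ! (i - 1))) in max 0 (bks ! i - lo))"

text \<open>beta(t) for t <= 0: beta(0) = Q and derivative -m_i on the i-th piece.\<close>
definition bl_pos :: "real \<times> real \<Rightarrow> real list \<Rightarrow> (int \<times> int) list \<Rightarrow> real \<Rightarrow> real \<times> real" where
  "bl_pos Q taus ms t =
     (fst Q + (\<Sum>i<length ms. seglen taus t i * of_int (fst (ms ! i))),
      snd Q + (\<Sum>i<length ms. seglen taus t i * of_int (snd (ms ! i))))"

text \<open>Bending at P from c x^m to c' x^{m'}: P lies on a wall (S,d,f), crossing is transversal,
  and c' x^{m'} is a term, other than c x^m, of c x^m f^{<n,m>}, n = +-perp d with <n,m> > 0.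
  (Walls meet only at the origin, which broken lines avoid, so at most one wall contains P.)\<close>
definition bend_ok :: "nat \<Rightarrow> nat \<Rightarrow> (int \<times> int \<Rightarrow> 'k::field ser) \<Rightarrow> real \<times> real
     \<Rightarrow> int \<times> int \<Rightarrow> 'k pser \<Rightarrow> int \<times> int \<Rightarrow> 'k pser \<Rightarrow> bool" where
  "bend_ok l1 l2 F P m c m' c' \<longleftrightarrow>
     (\<exists>S d f. (S, d, f) \<in> scat_walls l1 l2 F \<and> P \<in> S \<and> ip (perp d) m \<noteq> 0 \<and> m' \<noteq> m \<and>
        c' = (\<lambda>\<alpha>. ser_mul (mono_ser c m) (ser_pow f (nat \<bar>ip (perp d) m\<bar>)) \<alpha> m') \<and>
        c' \<noteq> (\<lambda>_. 0))"

text \<open>A broken line for m0 with endpoint Q, breakpoints taus, exponents ms = [m_0,...,m_l] and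
  coefficients cs = [c_0,...,c_l].\<close>
definition broken_line :: "nat \<Rightarrow> nat \<Rightarrow> (int \<times> int \<Rightarrow> 'k::field ser) \<Rightarrow> int \<times> int
     \<Rightarrow> real \<times> real \<Rightarrow> real list \<Rightarrow> (int \<times> int) list \<Rightarrow> 'k pser list \<Rightarrow> bool" where
  "broken_line l1 l2 F m0 Q taus ms cs \<longleftrightarrow>
     m0 \<noteq> (0,0) \<and> length ms = Suc (length taus) \<and> length cs = length ms \<and>
     sorted_wrt (<) taus \<and> (\<forall>\<tau>\<in>set taus. \<tau> < 0) \<and>
     ms ! 0 = m0 \<and> cs ! 0 = pser_one \<and>
     (\<forall>t\<le>0. bl_pos Q taus ms t \<noteq> (0,0)) \<and>
     (\<forall>i. 0 < i \<and> i \<le> length taus \<longrightarrow>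
        bend_ok l1 l2 F (bl_pos Q taus ms (taus ! (i - 1))) (ms ! (i - 1)) (cs ! (i - 1)) (ms ! i) (cs ! i))"

definition on_pos_axes :: "real \<times> real \<Rightarrow> bool" where
  "on_pos_axes P \<longleftrightarrow> (snd P = 0 \<and> fst P > 0) \<or> (fst P = 0 \<and> snd P > 0)"

text \<open>One-bending property for (d1,d2) and (ka,kb) (the side conditions coprime (a,b),
  d1 b - d2 a ~= 0, k >= 1 are imposed where the property is used).\<close>
definition one_bending :: "nat \<Rightarrow> nat \<Rightarrow> (int \<times> int \<Rightarrow> 'k::field ser)
     \<Rightarrow> nat \<Rightarrow> nat \<Rightarrow> nat \<Rightarrow> nat \<Rightarrow> nat \<Rightarrow> bool" where
  "one_bending l1 l2 F d1 d2 a b k \<longleftrightarrow>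
     (\<forall>Q taus ms cs.
        broken_line l1 l2 F (- int d1, - int d2) Q taus ms cs \<and>
        last ms = (int k * int a - int d1, int k * int b - int d2) \<and>
        (\<forall>\<tau>\<in>set taus. \<not> on_pos_axes (bl_pos Q taus ms \<tau>))
        \<longrightarrow> length taus = 1)"

end

theory Submission
  imports Defs
begin

lemma seglen_diff:
  assumes s: "sorted_wrt (<) (taus @ [0::real])"
    and i': "i' < Suc (length taus)" and i: "i < Suc (length taus)"
    and t12: "t1 \<le> t2" and lo: "i = 0 \<or> (taus @ [0])!(i-1) \<le> t1"
    and hi: "t2 \<le> (taus @ [0])!i"
  shows "seglen taus t1 i' = seglen taus t2 i' + (if i' = i then t2 - t1 else 0)"
proof -
  define bks where "bks = taus @ [0::real]"
  have len: "length bks = Suc (length taus)" by (simp add: bks_def)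
  have mono: "bks!x \<le> bks!y" if "x \<le> y" "y < Suc (length taus)" for x y
  proof (cases "x = y")
    case False
    then have "x < y" using that by simp
    then show ?thesis using s that len unfolding bks_def
      by (metis less_imp_le sorted_wrt_nth_less)
  qed simp
  have sg: "seglen taus t j = max 0 (bks!j - (if j = 0 then t else max t (bks!(j-1))))" for t j
    by (simp add: seglen_def bks_def Let_def)
  consider "i' < i" | "i' = i" | "i' > i" by linarith
  then show ?thesis
  proof cases
    case 1
    then have "bks!i' \<le> bks!(i-1)" using mono i by simp
    moreover have "bks!(i-1) \<le> t1" using lo 1 by (simp add: bks_def)
    ultimately show ?thesis using 1 t12 by (cases "i' = 0") (simp_all add: sg)
  next
    case 2
    then show ?thesis using lo hi t12 by (auto simp add: sg bks_def)
  next
    case 3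
    then have "bks!i \<le> bks!(i'-1)" using mono i' by simp
    then show ?thesis using 3 t12 hi by (simp add: sg bks_def)
  qed
qed

lemma bl_pos_seg:
  assumes s: "sorted_wrt (<) (taus @ [0::real])" and len: "length ms = Suc (length taus)"
    and i: "i < Suc (length taus)"
    and t12: "t1 \<le> t2" and lo: "i = 0 \<or> (taus @ [0])!(i-1) \<le> t1"
    and hi: "t2 \<le> (taus @ [0])!i"
  shows "bl_pos Q taus ms t1 = (fst (bl_pos Q taus ms t2) + (t2 - t1) * of_int (fst (ms!i)),
                               snd (bl_pos Q taus ms t2) + (t2 - t1) * of_int (snd (ms!i)))"
proof -
  have e: "seglen taus t1 j = seglen taus t2 j + (if j = i then t2 - t1 else 0)" if "j < length ms" for j
    using seglen_diff[OF s _ i t12 lo hi] that len by simp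
  have "(\<Sum>j<length ms. seglen taus t1 j * of_int (g (ms!j))) =
        (\<Sum>j<length ms. seglen taus t2 j * of_int (g (ms!j))) + (t2 - t1) * of_int (g (ms!i))" for g :: "int \<times> int \<Rightarrow> int"
  proof -
    have "(\<Sum>j<length ms. seglen taus t1 j * of_int (g (ms!j))) =
        (\<Sum>j<length ms. seglen taus t2 j * of_int (g (ms!j)) + (if j = i then (t2 - t1) * of_int (g (ms!i)) else 0))"
      by (rule sum.cong) (auto simp: e algebra_simps)
    also have "\<dots> = (\<Sum>j<length ms. seglen taus t2 j * of_int (g (ms!j))) + (t2 - t1) * of_int (g (ms!i))"
      using i len by (simp add: sum.distrib)
    finally show ?thesis .
  qed
  then show ?thesis unfolding bl_pos_def by (simp add: algebra_simps)
qed

definition supp_on :: "int \<times> int \<Rightarrow> 'k::field ser \<Rightarrow> bool" where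
  "supp_on d g \<longleftrightarrow> (\<forall>\<alpha> m. g \<alpha> m \<noteq> 0 \<longrightarrow> (\<exists>j::nat. m = (int j * fst d, int j * snd d)))"

lemma ser_mul_nz:
  assumes "ser_mul u v \<alpha> m \<noteq> 0"
  shows "\<exists>\<beta> m1. u \<beta> m1 \<noteq> 0 \<and> v (mdiff \<alpha> \<beta>) (fst m - fst m1, snd m - snd m1) \<noteq> 0"
proof -
  from assms obtain \<beta> where "(\<Sum>m1\<in>{m1. u \<beta> m1 \<noteq> 0}.
      u \<beta> m1 * v (mdiff \<alpha> \<beta>) (fst m - fst m1, snd m - snd m1)) \<noteq> 0"
    unfolding ser_mul_def by (meson sum.not_neutral_contains_not_neutral)
  then obtain m1 where "u \<beta> m1 * v (mdiff \<alpha> \<beta>) (fst m - fst m1, snd m - snd m1) \<noteq> 0"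
    by (meson sum.not_neutral_contains_not_neutral)
  then show ?thesis by (metis mult_not_zero)
qed

lemma supp_on_one: "supp_on d (ser_one :: 'k::field ser)"
  unfolding supp_on_def ser_one_def by (auto intro: exI[of _ 0])

lemma supp_on_mul:
  assumes "supp_on d u" "supp_on d v" shows "supp_on d (ser_mul u v)"
  unfolding supp_on_def
proof (intro allI impI)
  fix \<alpha> m assume "ser_mul u v \<alpha> m \<noteq> 0"
  then obtain \<beta> m1 where a: "u \<beta> m1 \<noteq> 0" and b: "v (mdiff \<alpha> \<beta>) (fst m - fst m1, snd m - snd m1) \<noteq> 0"
    using ser_mul_nz by blast
  obtain j1 where j1: "m1 = (int j1 * fst d, int j1 * snd d)" using a assms(1) unfolding supp_on_def by blast
  obtain j2 where j2: "(fst m - fst m1, snd m - snd m1) = (int j2 * fst d, int j2 * snd d)"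
    using b assms(2) unfolding supp_on_def by blast
  show "\<exists>j::nat. m = (int j * fst d, int j * snd d)"
    by (rule exI[of _ "j1 + j2"]) (use j1 j2 in \<open>auto simp: algebra_simps prod_eq_iff\<close>)
qed

lemma supp_on_pow: "supp_on d u \<Longrightarrow> supp_on d (ser_pow u n)"
  by (induction n) (auto simp: supp_on_one supp_on_mul)

lemma supp_P1: "supp_on (1,0) (P1 l1 :: 'k::field ser)"
  unfolding supp_on_def P1_def by (auto intro: exI[of _ 0])

lemma supp_P2: "supp_on (0,1) (P2 l2 :: 'k::field ser)"
  unfolding supp_on_def P2_def by (auto intro: exI[of _ 0])

lemma supp_wall: "is_wall_fn l1 l2 d f \<Longrightarrow> supp_on d f"
  unfolding supp_on_def is_wall_fn_def by (metis of_nat_0 mult_zero_left)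

lemma bend_info:
  fixes F :: "int \<times> int \<Rightarrow> 'k::field ser"
  assumes bo: "bend_ok l1 l2 F P m c m' c'" and wf: "\<forall>d\<in>ray_dirs. is_wall_fn l1 l2 d (F d)"
    and P0: "P \<noteq> (0,0)" and nax: "\<not> on_pos_axes P"
  shows "\<exists>dx dy s j. 0 \<le> dx \<and> 0 \<le> dy \<and> (dx \<noteq> 0 \<or> dy \<noteq> 0) \<and> s > 0 \<and>
     P = (- (s * of_int dx), - (s * of_int dy)) \<and> (j::int) \<ge> 1 \<and>
     m' = (fst m + j * dx, snd m + j * dy) \<and> dx * snd m - dy * fst m \<noteq> 0"
proof -
  obtain S d f where w: "(S, d, f) \<in> scat_walls l1 l2 F" and PS: "P \<in> S"
    and tr: "ip (perp d) m \<noteq> 0" and mm: "m' \<noteq> m"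
    and cc: "c' = (\<lambda>\<alpha>. ser_mul (mono_ser c m) (ser_pow f (nat \<bar>ip (perp d) m\<bar>)) \<alpha> m')"
    and cnz: "c' \<noteq> (\<lambda>_. 0)"
    using bo unfolding bend_ok_def by blast
  have geo: "0 \<le> fst d \<and> 0 \<le> snd d \<and> (fst d \<noteq> 0 \<or> snd d \<noteq> 0) \<and> supp_on d f \<and>
     (\<exists>s>0. P = (- (s * of_int (fst d)), - (s * of_int (snd d))))"
    using w
  proof (cases rule: UnE[OF w[unfolded scat_walls_def]])
    case 1
    then consider "S = {(x, 0) | x::real. True}" "d = (1,0)" "f = P1 l1"
      | "S = {(0, y) | y::real. True}" "d = (0,1)" "f = P2 l2" by auto
    then show ?thesis
    proof cases
      case 1
      then obtain x where "P = (x, 0)" using PS by auto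
      moreover have "x < 0" using P0 nax calculation unfolding on_pos_axes_def by auto
      ultimately show ?thesis using 1 supp_P1 by (auto intro!: exI[of _ "-x"])
    next
      case 2
      then obtain y where "P = (0, y)" using PS by auto
      moreover have "y < 0" using P0 nax calculation unfolding on_pos_axes_def by auto
      ultimately show ?thesis using 2 supp_P2 by (auto intro!: exI[of _ "-y"])
    qed
  next
    case 2
    then have dr: "d \<in> ray_dirs" and S: "S = {(- (t * of_int (fst d)), - (t * of_int (snd d))) | t::real. 0 \<le> t}"
      and f: "f = F d" by auto
    obtain t where t: "0 \<le> t" "P = (- (t * of_int (fst d)), - (t * of_int (snd d)))" using PS S by auto
    have "t \<noteq> 0" using t P0 by auto
    then have "t > 0" using t by simp
    moreover have "supp_on d f" using wf dr f supp_wall by blast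
    ultimately show ?thesis using dr t unfolding ray_dirs_def by auto
  qed
  from cnz cc obtain \<alpha> where "ser_mul (mono_ser c m) (ser_pow f (nat \<bar>ip (perp d) m\<bar>)) \<alpha> m' \<noteq> 0"
    by (metis (no_types, lifting))
  then obtain \<beta> m1 where a: "mono_ser c m \<beta> m1 \<noteq> 0"
    and b: "ser_pow f (nat \<bar>ip (perp d) m\<bar>) (mdiff \<alpha> \<beta>) (fst m' - fst m1, snd m' - snd m1) \<noteq> 0"
    using ser_mul_nz by blast
  have m1: "m1 = m" using a unfolding mono_ser_def by (auto split: if_splits)
  have "supp_on d (ser_pow f (nat \<bar>ip (perp d) m\<bar>))" using geo supp_on_pow by blast
  then obtain j where j: "(fst m' - fst m, snd m' - snd m) = (int j * fst d, int j * snd d)"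
    using b m1 unfolding supp_on_def by blast
  have "j \<noteq> 0" using j mm by (cases "j = 0") (auto simp: prod_eq_iff)
  then have j1: "int j \<ge> 1" by simp
  have m': "m' = (fst m + int j * fst d, snd m + int j * snd d)" using j by (auto simp: prod_eq_iff)
  have "fst d * snd m - snd d * fst m \<noteq> 0" using tr unfolding ip_def perp_def by (simp add: algebra_simps)
  then show ?thesis using geo j1 m' by blast
qed

lemma fin1:
  fixes d1 d2 a b k p q :: int
  assumes "d1 \<ge> 0" "d2 \<ge> 0" "a \<ge> 0" "b \<ge> 0" "k \<ge> 1" "p \<ge> 0" "q \<ge> 0" "q \<le> k*b"
    "d1*q - d2*p > 0" "p*b - q*a > 0" "d1*b - d2*a > 0" "d2 \<ge> (d1*b - d2*a)*k*b"
  shows False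
proof -
  define dt where "dt = d1*b - d2*a"
  define X where "X = p*b - q*a"
  have dt: "dt > 0" "X \<ge> 1" using assms by (auto simp: dt_def X_def)
  have "b \<noteq> 0"
  proof
    assume "b = 0" then have "dt = - d2*a" by (simp add: dt_def)
    moreover have "d2*a \<ge> 0" using assms by simp
    ultimately show False using dt by simp
  qed
  then have bp: "b > 0" using assms by simp
  have e: "b*(d1*q - d2*p) = q*dt - d2*X" by (simp add: dt_def X_def algebra_simps)
  have "q*dt \<le> (k*b)*dt" using assms dt by (intro mult_right_mono) auto
  also have "\<dots> \<le> d2" using assms by (simp add: dt_def algebra_simps)
  also have "d2 \<le> d2*X" using assms dt by (simp add: mult_le_cancel_left1)
  finally have "b*(d1*q - d2*p) \<le> 0" using e by simp
  moreover have "b*(d1*q - d2*p) > 0" using bp assms by simp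
  ultimately show False by simp
qed

lemma det_trans:
  fixes s u1 u2 v1 v2 w1 w2 :: int
  assumes "0\<le>u1" "0\<le>u2" "u1\<noteq>0 \<or> u2\<noteq>0" "0\<le>v1" "0\<le>v2" "0\<le>w1" "0\<le>w2" "w1\<noteq>0 \<or> w2\<noteq>0"
    and A: "s*(u1*v2 - u2*v1) > 0" and B: "s*(v1*w2 - v2*w1) > 0"
  shows "s*(u1*w2 - u2*w1) > 0"
proof -
  define A where "A = s*(u1*v2 - u2*v1)"
  define B where "B = s*(v1*w2 - v2*w1)"
  define X where "X = s*(u1*w2 - u2*w1)"
  have e: "X*(v1+v2) = A*(w1+w2) + B*(u1+u2)" by (simp add: A_def B_def X_def algebra_simps)
  have "A*(w1+w2) > 0" using assms A_def by (intro mult_pos_pos) auto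
  moreover have "B*(u1+u2) > 0" using assms B_def by (intro mult_pos_pos) auto
  ultimately have "X*(v1+v2) > 0" using e by simp
  then show ?thesis using assms unfolding X_def by (simp add: zero_less_mult_iff)
qed

lemma comb:
  fixes d1 d2 a b k s :: int and dx dy jj :: "nat \<Rightarrow> int" and n :: nat
  assumes sg: "s = 1 \<or> s = -1" and n: "2 \<le> n"
    and pos: "\<And>c. c < n \<Longrightarrow> 0 \<le> dx c \<and> 0 \<le> dy c \<and> (dx c \<noteq> 0 \<or> dy c \<noteq> 0) \<and> 1 \<le> jj c"
    and D: "0 \<le> d1" "0 \<le> d2" "d1 \<noteq> 0 \<or> d2 \<noteq> 0"
    and b0: "s * (d1 * dy 0 - d2 * dx 0) > 0"
    and ch: "\<And>c. Suc c < n \<Longrightarrow> s * (dx c * dy (Suc c) - dy c * dx (Suc c)) > 0"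
    and sx: "(\<Sum>c<n. jj c * dx c) = k * a" and sy: "(\<Sum>c<n. jj c * dy c) = k * b"
    and k: "1 \<le> k" and ab: "0 \<le> a" "0 \<le> b"
    and H: "d1*b - d2*a = 0 \<or> (d1*b - d2*a < 0 \<and> d1 \<ge> \<bar>d1*b - d2*a\<bar>*k*a)
            \<or> (d1*b - d2*a > 0 \<and> d2 \<ge> \<bar>d1*b - d2*a\<bar>*k*b)"
  shows False
proof -
  have cA: "s * (d1 * dy c - d2 * dx c) > 0" if "c < n" for c
    using that
  proof (induction c)
    case 0 then show ?case using b0 by simp
  next
    case (Suc c)
    show ?case
      by (rule det_trans[of d1 d2 "dx c" "dy c"]) (use Suc pos[of c] pos[of "Suc c"] D ch[of c] in auto)
  qed
  have cB: "s * (dx 0 * dy c - dy 0 * dx c) > 0" if "1 \<le> c" "c < n" for c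
    using that
  proof (induction c)
    case 0 then show ?case by simp
  next
    case (Suc c)
    show ?case
    proof (cases "c = 0")
      case True then show ?thesis using ch[of 0] Suc by simp
    next
      case False
      show ?thesis
        by (rule det_trans[of "dx 0" "dy 0" "dx c" "dy c"]) (use Suc False pos[of 0] pos[of c] pos[of "Suc c"] ch[of c] in auto)
    qed
  qed
  have "s * (d1 * (k*b) - d2 * (k*a)) = (\<Sum>c<n. jj c * (s * (d1 * dy c - d2 * dx c)))"
    unfolding sx[symmetric] sy[symmetric] by (simp add: sum_distrib_left sum_subtractf[symmetric] algebra_simps)
  also have "\<dots> > 0"
  proof (rule sum_pos)
    show "{..<n} \<noteq> {}" using n lessThan_empty_iff[of n] by simp
    fix i assume "i \<in> {..<n}"
    then show "0 < jj i * (s * (d1 * dy i - d2 * dx i))" using cA[of i] pos[of i] by (rule_tac mult_pos_pos) auto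
  qed simp
  finally have sD: "s * k * (d1*b - d2*a) > 0" by (simp add: algebra_simps)
  have "s * (dx 0 * (k*b) - dy 0 * (k*a)) = (\<Sum>c<n. jj c * (s * (dx 0 * dy c - dy 0 * dx c)))"
    unfolding sx[symmetric] sy[symmetric] by (simp add: sum_distrib_left sum_subtractf[symmetric] algebra_simps)
  also have "\<dots> > 0"
  proof (rule sum_pos2[of _ 1])
    show "1 \<in> {..<n}" using n by simp
    show "0 < jj 1 * (s * (dx 0 * dy 1 - dy 0 * dx 1))" using n pos[of 1] cB[of 1] by simp
    show "\<And>i. i \<in> {..<n} \<Longrightarrow> 0 \<le> jj i * (s * (dx 0 * dy i - dy 0 * dx i))"
    proof -
      fix i assume "i \<in> {..<n}"
      then show "0 \<le> jj i * (s * (dx 0 * dy i - dy 0 * dx i))"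
        using pos[of i] cB[of i] by (cases "i = 0") auto
    qed
  qed simp
  finally have sW: "s * k * (dx 0 * b - dy 0 * a) > 0" by (simp add: algebra_simps)
  define p where "p = jj 0 * dx 0"
  define q where "q = jj 0 * dy 0"
  have pq: "p \<ge> 0" "q \<ge> 0" using pos[of 0] n by (auto simp: p_def q_def)
  have "p \<le> k*a" unfolding p_def sx[symmetric]
    proof (rule member_le_sum[where f = "\<lambda>c. jj c * dx c"])
    fix x assume "x \<in> {..<n} - {0}"
    then have "0 \<le> jj x" "0 \<le> dx x" using pos[of x] by auto
    then show "0 \<le> jj x * dx x" by simp
  qed (use n in auto)
  have "q \<le> k*b" unfolding q_def sy[symmetric]
    proof (rule member_le_sum[where f = "\<lambda>c. jj c * dy c"])
    fix x assume "x \<in> {..<n} - {0}"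
    then have "0 \<le> jj x" "0 \<le> dy x" using pos[of x] by auto
    then show "0 \<le> jj x * dy x" by simp
  qed (use n in auto)
  have j0: "jj 0 \<ge> 1" using pos[of 0] n by simp
  have e1: "s * (d1*q - d2*p) = jj 0 * (s * (d1 * dy 0 - d2 * dx 0))" by (simp add: p_def q_def algebra_simps)
  have e2: "s * (p*b - q*a) = jj 0 * (s * (dx 0 * b - dy 0 * a))" by (simp add: p_def q_def algebra_simps)
  have sW': "s * (dx 0 * b - dy 0 * a) > 0" using sW k
    by (metis mult.commute mult.left_commute zero_less_mult_pos zero_less_one_class.zero_le_one less_le_trans zero_less_one)
  have sD': "s * (d1*b - d2*a) > 0" using sD k
    by (metis mult.commute mult.left_commute zero_less_mult_pos less_le_trans zero_less_one)
  have f1: "s * (d1*q - d2*p) > 0" unfolding e1 using b0 j0 by (rule_tac mult_pos_pos) auto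
  have f2: "s * (p*b - q*a) > 0" unfolding e2 using sW' j0 by (rule_tac mult_pos_pos) auto
  from sg show False
  proof
    assume s1: "s = 1"
    then have "d1*b - d2*a > 0" using sD' by simp
    then have "d2 \<ge> (d1*b - d2*a)*k*b" using H by auto
    then show False using fin1[of d1 d2 a b k p q] D ab k pq \<open>q \<le> k*b\<close> f1 f2 s1 \<open>d1*b - d2*a > 0\<close> by simp
  next
    assume s1: "s = -1"
    then have dt: "d2*a - d1*b > 0" using sD' by simp
    then have "d1 \<ge> (d2*a - d1*b)*k*a" using H by auto
    then show False using fin1[of d2 d1 b a k q p] D ab k pq \<open>p \<le> k*a\<close> f1 f2 s1 dt by (simp add: algebra_simps)
  qed
qed

lemma main_ob:
  fixes F :: "int \<times> int \<Rightarrow> 'k::field ser" and l1 l2 a b k d1 d2 :: nat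
  assumes wf: "\<forall>d\<in>ray_dirs. is_wall_fn l1 l2 d (F d)" and cop: "coprime a b" and k: "1 \<le> k"
    and H: "int d1 * int b - int d2 * int a = 0 \<or>
       (int d1 * int b - int d2 * int a < 0 \<and> int d1 \<ge> \<bar>int d1 * int b - int d2 * int a\<bar> * int k * int a) \<or>
       (int d1 * int b - int d2 * int a > 0 \<and> int d2 \<ge> \<bar>int d1 * int b - int d2 * int a\<bar> * int k * int b)"
  shows "one_bending l1 l2 F d1 d2 a b k"
  unfolding one_bending_def
proof (intro allI impI)
  fix Q taus ms cs
  assume A: "broken_line l1 l2 F (- int d1, - int d2) Q taus ms cs \<and>
        last ms = (int k * int a - int d1, int k * int b - int d2) \<and>
        (\<forall>\<tau>\<in>set taus. \<not> on_pos_axes (bl_pos Q taus ms \<tau>))"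
  define n where "n = length taus"
  have m0nz: "(- int d1, - int d2) \<noteq> (0,0)" and lenms: "length ms = Suc n"
    and srt: "sorted_wrt (<) taus" and neg: "\<forall>\<tau>\<in>set taus. \<tau> < 0"
    and ms0: "ms ! 0 = (- int d1, - int d2)"
    and nz: "\<forall>t\<le>0. bl_pos Q taus ms t \<noteq> (0,0)"
    and bends: "\<forall>i. 0 < i \<and> i \<le> n \<longrightarrow>
        bend_ok l1 l2 F (bl_pos Q taus ms (taus ! (i - 1))) (ms ! (i - 1)) (cs ! (i - 1)) (ms ! i) (cs ! i)"
    and lst: "last ms = (int k * int a - int d1, int k * int b - int d2)"
    and nax: "\<forall>\<tau>\<in>set taus. \<not> on_pos_axes (bl_pos Q taus ms \<tau>)"
    using A unfolding broken_line_def n_def by auto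
  have msn: "ms ! n = (int k * int a - int d1, int k * int b - int d2)"
    using lst lenms by (metis diff_Suc_1 last_conv_nth list.size(3) nat.distinct(1))
  have ab: "a \<noteq> 0 \<or> b \<noteq> 0" using cop by auto
  have "n \<noteq> 0"
  proof
    assume "n = 0"
    then have "int k * int a = 0 \<and> int k * int b = 0" using msn ms0 by simp
    then show False using k ab by simp
  qed
  moreover have "\<not> 2 \<le> n"
  proof
    assume n2: "2 \<le> n"
    have info: "\<exists>dx dy s j. 0 \<le> dx \<and> 0 \<le> dy \<and> (dx \<noteq> 0 \<or> dy \<noteq> 0) \<and> s > 0 \<and>
       bl_pos Q taus ms (taus!c) = (- (s * of_int dx), - (s * of_int dy)) \<and> (j::int) \<ge> 1 \<and>
       ms!(Suc c) = (fst (ms!c) + j * dx, snd (ms!c) + j * dy) \<and> dx * snd (ms!c) - dy * fst (ms!c) \<noteq> 0"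
      if c: "c < n" for c
    proof -
      have tin: "taus!c \<in> set taus" using c n_def by simp
      have "bend_ok l1 l2 F (bl_pos Q taus ms (taus!c)) (ms!c) (cs!c) (ms!(Suc c)) (cs!(Suc c))"
        using bends[rule_format, of "Suc c"] c by simp
      moreover have "bl_pos Q taus ms (taus!c) \<noteq> (0,0)" using nz neg tin by auto
      moreover have "\<not> on_pos_axes (bl_pos Q taus ms (taus!c))" using nax tin by auto
      ultimately show ?thesis using bend_info wf by blast
    qed
    then obtain dx dy s j where I: "\<And>c. c < n \<Longrightarrow> 0 \<le> dx c \<and> 0 \<le> dy c \<and> (dx c \<noteq> 0 \<or> dy c \<noteq> 0) \<and> s c > 0 \<and>
       bl_pos Q taus ms (taus!c) = (- (s c * of_int (dx c)), - (s c * of_int (dy c))) \<and> (j c::int) \<ge> 1 \<and>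
       ms!(Suc c) = (fst (ms!c) + j c * dx c, snd (ms!c) + j c * dy c) \<and> dx c * snd (ms!c) - dy c * fst (ms!c) \<noteq> 0"
      by metis
    define P where "P c = bl_pos Q taus ms (taus!c)" for c
    define mX where "mX c = real_of_int (fst (ms!c))" for c
    define mY where "mY c = real_of_int (snd (ms!c))" for c
    define L where "L c = fst (P c) * mY c - snd (P c) * mX c" for c
    have srt0: "sorted_wrt (<) (taus @ [0::real])" using srt neg by (auto simp: sorted_wrt_append)
    have seg: "P c = (fst (P (Suc c)) + (taus!(Suc c) - taus!c) * mX (Suc c),
                      snd (P (Suc c)) + (taus!(Suc c) - taus!c) * mY (Suc c))"
      and dpos: "taus!(Suc c) - taus!c > 0" if c: "Suc c < n" for c
    proof -
      have lt: "taus!c < taus!(Suc c)" using srt c n_def by (simp add: sorted_wrt_iff_nth_less)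
      then show "taus!(Suc c) - taus!c > 0" by simp
      have "bl_pos Q taus ms (taus!c) = (fst (bl_pos Q taus ms (taus!(Suc c))) + (taus!(Suc c) - taus!c) * of_int (fst (ms!(Suc c))),
                               snd (bl_pos Q taus ms (taus!(Suc c))) + (taus!(Suc c) - taus!c) * of_int (snd (ms!(Suc c))))"
        by (rule bl_pos_seg[OF srt0]) (use lenms c lt n_def in \<open>auto simp: nth_append\<close>)
      then show "P c = (fst (P (Suc c)) + (taus!(Suc c) - taus!c) * mX (Suc c),
                      snd (P (Suc c)) + (taus!(Suc c) - taus!c) * mY (Suc c))"
        by (simp add: P_def mX_def mY_def)
    qed
    have inv1: "fst (P c) * mY (Suc c) - snd (P c) * mX (Suc c) = L c" if c: "c < n" for c
      using I[OF c] unfolding L_def P_def mX_def mY_def by (simp add: algebra_simps)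
    have inv2: "L (Suc c) = L c" if c: "Suc c < n" for c
    proof -
      have f: "fst (P c) = fst (P (Suc c)) + (taus!(Suc c) - taus!c) * mX (Suc c)"
        and g: "snd (P c) = snd (P (Suc c)) + (taus!(Suc c) - taus!c) * mY (Suc c)"
        using seg[OF c] by (simp_all add: prod_eq_iff)
      have "L (Suc c) = fst (P c) * mY (Suc c) - snd (P c) * mX (Suc c)"
        unfolding L_def f g by (simp add: algebra_simps)
      then show ?thesis using inv1 c by simp
    qed
    have Lc: "L c = L 0" if "c < n" for c
      using that by (induction c) (auto simp: inv2)
    define T where "T = int d1 * dy 0 - int d2 * dx 0"
    have L0: "L 0 = - (s 0 * of_int T)"
      using I[of 0] n2 ms0 unfolding L_def P_def mX_def mY_def T_def by (simp add: algebra_simps)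
    have T0: "T \<noteq> 0" using I[of 0] n2 ms0 unfolding T_def by (simp add: algebra_simps)
    have s0: "s 0 > 0" using I[of 0] n2 by simp
    define sg :: int where "sg = (if L 0 < 0 then 1 else -1)"
    have b0: "sg * (int d1 * dy 0 - int d2 * dx 0) > 0"
    proof (cases "L 0 < 0")
      case True
      then have "s 0 * of_int T > 0" using L0 by simp
      then have "T > 0" using s0 by (simp add: zero_less_mult_iff)
      then show ?thesis using True by (simp add: sg_def T_def)
    next
      case False
      then have "s 0 * of_int T \<le> 0" using L0 by simp
      then have "T \<le> 0" using s0 by (simp add: mult_le_0_iff)
      then show ?thesis using False T0 by (simp add: sg_def T_def)
    qed
    have L0nz: "L 0 \<noteq> 0" using L0 T0 s0 by simp
    have ch: "sg * (dx c * dy (Suc c) - dy c * dx (Suc c)) > 0" if c: "Suc c < n" for c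
    proof -
      define Dc where "Dc = dx c * dy (Suc c) - dy c * dx (Suc c)"
      define \<Delta> where "\<Delta> = taus!(Suc c) - taus!c"
      have Ic: "P c = (- (s c * of_int (dx c)), - (s c * of_int (dy c)))" "s c > 0"
        using I[of c] c unfolding P_def by auto
      have Is: "P (Suc c) = (- (s (Suc c) * of_int (dx (Suc c))), - (s (Suc c) * of_int (dy (Suc c))))" "s (Suc c) > 0"
        using I[of "Suc c"] c unfolding P_def by auto
      have "fst (P c) * snd (P (Suc c)) - snd (P c) * fst (P (Suc c)) = s c * s (Suc c) * of_int Dc"
        using Ic Is unfolding Dc_def by (simp add: algebra_simps)
      moreover have "fst (P c) * snd (P (Suc c)) - snd (P c) * fst (P (Suc c)) = - (\<Delta> * L (Suc c))"
      proof -
        have f: "fst (P c) = fst (P (Suc c)) + \<Delta> * mX (Suc c)"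
          and g: "snd (P c) = snd (P (Suc c)) + \<Delta> * mY (Suc c)"
          using seg[OF c] unfolding \<Delta>_def by (simp_all add: prod_eq_iff)
        show ?thesis unfolding L_def f g by (simp add: algebra_simps)
      qed
      ultimately have e: "s c * s (Suc c) * of_int Dc = - (\<Delta> * L 0)" using Lc[of "Suc c"] c by simp
      have dp: "\<Delta> > 0" using dpos[OF c] \<Delta>_def by simp
      have sp: "s c * s (Suc c) > 0" using Ic Is by simp
      show ?thesis
      proof (cases "L 0 < 0")
        case True
        then have "- (\<Delta> * L 0) > 0" using dp by (simp add: mult_pos_neg)
        then have "s c * s (Suc c) * of_int Dc > 0" using e by simp
        then have "Dc > 0" using sp by (simp add: zero_less_mult_iff)
        then show ?thesis using True by (simp add: sg_def Dc_def)
      next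
        case False
        then have "L 0 > 0" using L0nz by simp
        then have "- (\<Delta> * L 0) < 0" using dp by simp
        then have "s c * s (Suc c) * of_int Dc < 0" using e by simp
        then have "Dc < 0" using sp Ic(2) Is(2) by (simp add: mult_less_0_iff)
        then show ?thesis using False by (simp add: sg_def Dc_def)
      qed
    qed
    have tele: "(\<Sum>c<n. g (ms!(Suc c)) - g (ms!c)) = g (ms!n) - g (ms!0)" for g :: "int \<times> int \<Rightarrow> int"
      by (rule sum_lessThan_telescope)
    have sx: "(\<Sum>c<n. j c * dx c) = int k * int a"
    proof -
      have "(\<Sum>c<n. j c * dx c) = (\<Sum>c<n. fst (ms!(Suc c)) - fst (ms!c))"
        by (rule sum.cong) (use I in auto)
      also have "\<dots> = int k * int a" using tele[of fst] msn ms0 by simp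
      finally show ?thesis .
    qed
    have sy: "(\<Sum>c<n. j c * dy c) = int k * int b"
    proof -
      have "(\<Sum>c<n. j c * dy c) = (\<Sum>c<n. snd (ms!(Suc c)) - snd (ms!c))"
        by (rule sum.cong) (use I in auto)
      also have "\<dots> = int k * int b" using tele[of snd] msn ms0 by simp
      finally show ?thesis .
    qed
    show False
    proof (rule comb[of sg n dx dy j "int d1" "int d2" "int k" "int a" "int b"])
      show "sg = 1 \<or> sg = -1" by (simp add: sg_def)
      show "\<And>c. c < n \<Longrightarrow> 0 \<le> dx c \<and> 0 \<le> dy c \<and> (dx c \<noteq> 0 \<or> dy c \<noteq> 0) \<and> 1 \<le> j c"
        using I by blast
      show "int d1 \<noteq> 0 \<or> int d2 \<noteq> 0" using m0nz by auto
    qed (use n2 b0 ch sx sy k H in auto)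
  qed
  ultimately have "n = 1" by linarith
  then show "length taus = 1" unfolding n_def .
qed

theorem corollary5p12:
  fixes F :: "int \<times> int \<Rightarrow> 'k::field_char_0 ser" and l1 l2 a b k :: nat
  assumes "1 \<le> l1" and "1 \<le> l2" and "scat_consistent l1 l2 F"
    and "coprime a b" and "1 \<le> k"
  shows "(\<forall>d1 d2. ((d1, d2) = (k*a*b + 1, k*b^2) \<or> (d1, d2) = (k*a^2, k*a*b + 1))
            \<longrightarrow> one_bending l1 l2 F d1 d2 a b k)
       \<and> (\<forall>d1 d2. int d1 * int b - int d2 * int a \<noteq> 0 \<and>
            ((int d1 * int b - int d2 * int a < 0 \<and>
                int d1 \<ge> \<bar>int d1 * int b - int d2 * int a\<bar> * int k * int a) \<or>
             (int d1 * int b - int d2 * int a > 0 \<and>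
                int d2 \<ge> \<bar>int d1 * int b - int d2 * int a\<bar> * int k * int b))
            \<longrightarrow> one_bending l1 l2 F d1 d2 a b k)
       \<and> (\<forall>m::int. 0 < m \<longrightarrow>
            infinite {(d1, d2). m = \<bar>int d1 * int b - int d2 * int a\<bar> \<and>
                                one_bending l1 l2 F d1 d2 a b k})"
proof -
  have wf: "\<forall>d\<in>ray_dirs. is_wall_fn l1 l2 d (F d)" using assms(3) unfolding scat_consistent_def by blast
  note ob = main_ob[OF wf assms(4) assms(5)]
  have p1: "one_bending l1 l2 F d1 d2 a b k"
    if "(d1, d2) = (k*a*b + 1, k*b^2) \<or> (d1, d2) = (k*a^2, k*a*b + 1)" for d1 d2
    using that
  proof
    assume "(d1, d2) = (k*a*b + 1, k*b^2)"
    then have d: "int d1 = int k * int a * int b + 1" "int d2 = int k * int b * int b"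
      by (auto simp: power2_eq_square)
    have dt: "int d1 * int b - int d2 * int a = int b" unfolding d by (simp add: algebra_simps)
    show ?thesis
    proof (rule ob)
      show "int d1 * int b - int d2 * int a = 0 \<or>
       (int d1 * int b - int d2 * int a < 0 \<and> int d1 \<ge> \<bar>int d1 * int b - int d2 * int a\<bar> * int k * int a) \<or>
       (int d1 * int b - int d2 * int a > 0 \<and> int d2 \<ge> \<bar>int d1 * int b - int d2 * int a\<bar> * int k * int b)"
        unfolding dt using d by (cases "b = 0") (auto simp: algebra_simps)
    qed
  next
    assume "(d1, d2) = (k*a^2, k*a*b + 1)"
    then have d: "int d1 = int k * int a * int a" "int d2 = int k * int a * int b + 1"
      by (auto simp: power2_eq_square)
    have dt: "int d1 * int b - int d2 * int a = - int a" unfolding d by (simp add: algebra_simps)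
    show ?thesis
    proof (rule ob)
      show "int d1 * int b - int d2 * int a = 0 \<or>
       (int d1 * int b - int d2 * int a < 0 \<and> int d1 \<ge> \<bar>int d1 * int b - int d2 * int a\<bar> * int k * int a) \<or>
       (int d1 * int b - int d2 * int a > 0 \<and> int d2 \<ge> \<bar>int d1 * int b - int d2 * int a\<bar> * int k * int b)"
        unfolding dt using d by (cases "a = 0") (auto simp: algebra_simps)
    qed
  qed
  have p3: "infinite {(d1, d2). m = \<bar>int d1 * int b - int d2 * int a\<bar> \<and> one_bending l1 l2 F d1 d2 a b k}"
    if m: "0 < m" for m :: int
  proof (cases "b = 0")
    case True
    then have a1: "a = 1" using assms(4) by simp
    define T where "T = nat (m * int k)"
    define f where "f t = (t + T, nat m)" for t :: nat
    have mem: "f t \<in> {(d1, d2). m = \<bar>int d1 * int b - int d2 * int a\<bar> \<and> one_bending l1 l2 F d1 d2 a b k}" for t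
    proof -
      have e: "int (t + T) * int b - int (nat m) * int a = - m" using True a1 m by simp
      have tt: "int (t + T) \<ge> m * int k" unfolding T_def using m by simp
      have "one_bending l1 l2 F (t + T) (nat m) a b k"
        by (rule ob, unfold e) (use m a1 tt in simp)
      then show "f t \<in> {(d1, d2). m = \<bar>int d1 * int b - int d2 * int a\<bar> \<and> one_bending l1 l2 F d1 d2 a b k}"
        using e m unfolding f_def by simp
    qed
    have "f ` UNIV \<subseteq> {(d1, d2). m = \<bar>int d1 * int b - int d2 * int a\<bar> \<and> one_bending l1 l2 F d1 d2 a b k}" by (rule image_subsetI, rule mem)
    moreover have "inj f" unfolding f_def by (auto intro: injI)
    ultimately show ?thesis
      by (meson finite_imageD infinite_UNIV_nat infinite_super)
  next
    case False
    then have bp: "int b \<ge> 1" by simp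
    obtain u v where uv: "u * int b + v * int a = gcd (int b) (int a)" using bezout_int by blast
    have "coprime (int b) (int a)" using assms(4) by (simp add: coprime_commute)
    then have "gcd (int b) (int a) = 1" by (simp add: coprime_iff_gcd_eq_1)
    then have uv1: "u * int b + v * int a = 1" using uv by simp
    define T where "T = nat (\<bar>m * v\<bar> + m * int k * int b)"
    define D1 where "D1 t = m * u + int (t + T) * int a" for t :: nat
    define D2 where "D2 t = - m * v + int (t + T) * int b" for t :: nat
    have dt: "D1 t * int b - D2 t * int a = m" for t
    proof -
      have "D1 t * int b - D2 t * int a = m * (u * int b + v * int a)"
        unfolding D1_def D2_def by (simp add: algebra_simps)
      then show ?thesis using uv1 by simp
    qed
    have D2ge: "D2 t \<ge> m * int k * int b" for t
    proof -
      define tt where "tt = int (t + T)"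
      have "tt * int b \<ge> tt * 1" using bp by (intro mult_left_mono) (auto simp: tt_def)
      moreover have "tt \<ge> \<bar>m * v\<bar> + m * int k * int b" unfolding T_def tt_def using m by simp
      moreover have "D2 t = - (m * v) + tt * int b" unfolding D2_def tt_def by simp
      ultimately show ?thesis using abs_ge_minus_self[of "m*v"] by linarith
    qed
    have D2pos: "D2 t \<ge> 0" for t
    proof -
      have "0 \<le> m * int k * int b" using m by simp
      then show ?thesis using D2ge[of t] by linarith
    qed
    have D1pos: "D1 t \<ge> 0" for t
    proof -
      have "D1 t * int b = m + D2 t * int a" using dt[of t] by simp
      moreover have "D2 t * int a \<ge> 0" using D2pos by simp
      ultimately have "D1 t * int b > 0" using m by simp
      then show ?thesis using bp by (simp add: zero_less_mult_iff)
    qed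
    define f where "f t = (nat (D1 t), nat (D2 t))" for t :: nat
    have mem: "f t \<in> {(d1, d2). m = \<bar>int d1 * int b - int d2 * int a\<bar> \<and> one_bending l1 l2 F d1 d2 a b k}" for t
    proof -
      have e: "int (nat (D1 t)) * int b - int (nat (D2 t)) * int a = m" using dt D1pos D2pos by simp
      have "one_bending l1 l2 F (nat (D1 t)) (nat (D2 t)) a b k"
        by (rule ob, unfold e) (use m D2ge[of t] D2pos[of t] in simp)
      then show "f t \<in> {(d1, d2). m = \<bar>int d1 * int b - int d2 * int a\<bar> \<and> one_bending l1 l2 F d1 d2 a b k}"
        using e m unfolding f_def by simp
    qed
    have "f ` UNIV \<subseteq> {(d1, d2). m = \<bar>int d1 * int b - int d2 * int a\<bar> \<and> one_bending l1 l2 F d1 d2 a b k}" by (rule image_subsetI, rule mem)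
    moreover have "inj f"
    proof (rule injI)
      fix x y assume "f x = f y"
      then have "nat (D2 x) = nat (D2 y)" unfolding f_def by simp
      then have "D2 x = D2 y" using D2pos[of x] D2pos[of y] by simp
      then show "x = y" unfolding D2_def using bp by simp
    qed
    ultimately show ?thesis
      by (meson finite_imageD infinite_UNIV_nat infinite_super)
  qed
  have p2: "one_bending l1 l2 F d1 d2 a b k"
    if "int d1 * int b - int d2 * int a \<noteq> 0 \<and>
            ((int d1 * int b - int d2 * int a < 0 \<and>
                int d1 \<ge> \<bar>int d1 * int b - int d2 * int a\<bar> * int k * int a) \<or>
             (int d1 * int b - int d2 * int a > 0 \<and>
                int d2 \<ge> \<bar>int d1 * int b - int d2 * int a\<bar> * int k * int b))" for d1 d2
    by (rule ob) (use that in blast)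
  show ?thesis
  proof (intro conjI allI impI)
    fix d1 d2 assume "(d1, d2) = (k*a*b + 1, k*b^2) \<or> (d1, d2) = (k*a^2, k*a*b + 1)"
    then show "one_bending l1 l2 F d1 d2 a b k" by (rule p1)
  next
    fix d1 d2 assume h: "int d1 * int b - int d2 * int a \<noteq> 0 \<and>
            ((int d1 * int b - int d2 * int a < 0 \<and>
                int d1 \<ge> \<bar>int d1 * int b - int d2 * int a\<bar> * int k * int a) \<or>
             (int d1 * int b - int d2 * int a > 0 \<and>
                int d2 \<ge> \<bar>int d1 * int b - int d2 * int a\<bar> * int k * int b))"
    show "one_bending l1 l2 F d1 d2 a b k" by (rule p2[OF h])
  next
    fix m :: int assume "0 < m"
    then show "infinite {(d1, d2). m = \<bar>int d1 * int b - int d2 * int a\<bar> \<and>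
                                one_bending l1 l2 F d1 d2 a b k}" by (rule p3)
  qed
qed

end
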